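(* Let $\mathcal{H}$ be a complex Hilbert space, $A\in\mathcal{B}(\mathcal{H})$ positive, $S\in\mathcal{B}_A(\mathcal{H})$, and let $m_A(S)=\inf_{\|z\|_A=1}\|Sz\|_A$. Then $$d\omega_A^2(S)\ge\max\left\{\left(1+m_A^2(S)\right)\omega_A^2(S),\ \left(1+\|S\|_A^2\right)c_A^2(S)\right\}.$$
   Context: $\mathcal{B}(\mathcal{H})$ denotes the bounded linear operators on $\mathcal{H}$. For positive $A$, $\langle x,z\rangle_A=\langle Ax,z\rangle$ and $\|z\|_A=\|A^{1/2}z\|$. $\mathcal{B}_A(\mathcal{H})$ is the set of $S\in\mathcal{B}(\mathcal{H})$ for which some $R\in\mathcal{B}(\mathcal{H})$ satisfies $AR=S^*A$. For operators $T$ bounded with respect to $\|\cdot\|_A$: $\|T\|_A=\sup_{\|z\|_A=1}\|Tz\|_A$, $\omega_A(T)=\sup_{\|z\|_A=1}|\langle Tz,z\rangle_A|$, $c_A(T)=\inf_{\|z\|_A=1}|\langle Tz,z\rangle_A|$, and $d\omega_A(T)=\sup_{\|z\|_A=1}(|\langle Tz,z\rangle_A|^2+\|Tz\|_A^4)^{1/2}$. *)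

theory Defs
  imports Complex_Main
begin

definition hnorm :: "('a \<Rightarrow> 'a \<Rightarrow> complex) \<Rightarrow> 'a \<Rightarrow> real" where
  "hnorm ip x = sqrt (Re (ip x x))"

definition is_complex_hilbert ::
  "(complex \<Rightarrow> 'a::ab_group_add \<Rightarrow> 'a) \<Rightarrow> ('a \<Rightarrow> 'a \<Rightarrow> complex) \<Rightarrow> bool" where
  "is_complex_hilbert sc ip \<longleftrightarrow>
     vector_space sc \<and>
     (\<forall>x y z. ip (x + y) z = ip x z + ip y z) \<and>
     (\<forall>c x y. ip (sc c x) y = c * ip x y) \<and>
     (\<forall>x y. ip y x = cnj (ip x y)) \<and>
     (\<forall>x. 0 \<le> Re (ip x x)) \<and>
     (\<forall>x. ip x x = 0 \<longrightarrow> x = 0) \<and>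
     (\<forall>X::nat \<Rightarrow> 'a.
        (\<forall>e>0. \<exists>N. \<forall>m\<ge>N. \<forall>n\<ge>N. hnorm ip (X m - X n) < e) \<longrightarrow>
        (\<exists>l. (\<lambda>n. hnorm ip (X n - l)) \<longlonglongrightarrow> 0))"

definition bounded_op ::
  "(complex \<Rightarrow> 'a::ab_group_add \<Rightarrow> 'a) \<Rightarrow> ('a \<Rightarrow> 'a \<Rightarrow> complex) \<Rightarrow> ('a \<Rightarrow> 'a) \<Rightarrow> bool" where
  "bounded_op sc ip T \<longleftrightarrow> Vector_Spaces.linear sc sc T \<and> (\<exists>C. \<forall>x. hnorm ip (T x) \<le> C * hnorm ip x)"

definition positive_op ::
  "(complex \<Rightarrow> 'a::ab_group_add \<Rightarrow> 'a) \<Rightarrow> ('a \<Rightarrow> 'a \<Rightarrow> complex) \<Rightarrow> ('a \<Rightarrow> 'a) \<Rightarrow> bool" where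
  "positive_op sc ip A \<longleftrightarrow> bounded_op sc ip A \<and> (\<forall>x. Im (ip (A x) x) = 0 \<and> 0 \<le> Re (ip (A x) x))"

text \<open>B_A(H): S in B(H) such that A R = S^* A for some R in B(H). The operator equation
  A R = S^* A is written out via the defining property of the Hilbert adjoint:
  <A R x, y> = <S^* A x, y> = <A x, S y> for all x, y.\<close>
definition BA ::
  "(complex \<Rightarrow> 'a::ab_group_add \<Rightarrow> 'a) \<Rightarrow> ('a \<Rightarrow> 'a \<Rightarrow> complex) \<Rightarrow> ('a \<Rightarrow> 'a) \<Rightarrow> ('a \<Rightarrow> 'a) \<Rightarrow> bool" where
  "BA sc ip A S \<longleftrightarrow> bounded_op sc ip S \<and>
     (\<exists>R. bounded_op sc ip R \<and> (\<forall>x y. ip (A (R x)) y = ip (A x) (S y)))"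

definition ipA :: "('a \<Rightarrow> 'a \<Rightarrow> complex) \<Rightarrow> ('a \<Rightarrow> 'a) \<Rightarrow> 'a \<Rightarrow> 'a \<Rightarrow> complex" where
  "ipA ip A x z = ip (A x) z"

definition normA :: "('a \<Rightarrow> 'a \<Rightarrow> complex) \<Rightarrow> ('a \<Rightarrow> 'a) \<Rightarrow> 'a \<Rightarrow> real" where
  "normA ip A z = sqrt (Re (ipA ip A z z))"

definition opnormA :: "('a \<Rightarrow> 'a \<Rightarrow> complex) \<Rightarrow> ('a \<Rightarrow> 'a) \<Rightarrow> ('a \<Rightarrow> 'a) \<Rightarrow> real" where
  "opnormA ip A T = (SUP z\<in>{z. normA ip A z = 1}. normA ip A (T z))"

definition omegaA :: "('a \<Rightarrow> 'a \<Rightarrow> complex) \<Rightarrow> ('a \<Rightarrow> 'a) \<Rightarrow> ('a \<Rightarrow> 'a) \<Rightarrow> real" where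
  "omegaA ip A T = (SUP z\<in>{z. normA ip A z = 1}. cmod (ipA ip A (T z) z))"

definition cA :: "('a \<Rightarrow> 'a \<Rightarrow> complex) \<Rightarrow> ('a \<Rightarrow> 'a) \<Rightarrow> ('a \<Rightarrow> 'a) \<Rightarrow> real" where
  "cA ip A T = (INF z\<in>{z. normA ip A z = 1}. cmod (ipA ip A (T z) z))"

definition mA :: "('a \<Rightarrow> 'a \<Rightarrow> complex) \<Rightarrow> ('a \<Rightarrow> 'a) \<Rightarrow> ('a \<Rightarrow> 'a) \<Rightarrow> real" where
  "mA ip A T = (INF z\<in>{z. normA ip A z = 1}. normA ip A (T z))"

definition domegaA :: "('a \<Rightarrow> 'a \<Rightarrow> complex) \<Rightarrow> ('a \<Rightarrow> 'a) \<Rightarrow> ('a \<Rightarrow> 'a) \<Rightarrow> real" where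
  "domegaA ip A T = (SUP z\<in>{z. normA ip A z = 1}.
      sqrt ((cmod (ipA ip A (T z) z))\<^sup>2 + (normA ip A (T z)) ^ 4))"

end

theory Submission
  imports Defs
begin

lemma cs_gen:
  fixes f :: "'a::ab_group_add \<Rightarrow> 'a \<Rightarrow> complex" and sc :: "complex \<Rightarrow> 'a \<Rightarrow> 'a"
  assumes add: "\<And>x y z. f (x+y) z = f x z + f y z"
    and scl: "\<And>c x y. f (sc c x) y = c * f x y"
    and herm: "\<And>x y. f y x = cnj (f x y)"
    and pos: "\<And>x. 0 \<le> Re (f x x)"
  shows "(cmod (f x y))^2 \<le> Re (f x x) * Re (f y y)"
proof -
  define b where "b = f x y"
  define a where "a = Re (f x x)"
  define c where "c = Re (f y y)"
  have fxx: "f x x = of_real a" proof -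
    have "Im (f x x) = - Im (f x x)" using arg_cong[OF herm[of x x], of Im] by simp
    thus ?thesis unfolding a_def by (simp add: complex_eq_iff)
  qed
  have fyy: "f y y = of_real c" proof -
    have "Im (f y y) = - Im (f y y)" using arg_cong[OF herm[of y y], of Im] by simp
    thus ?thesis unfolding c_def by (simp add: complex_eq_iff)
  qed
  have key: "0 \<le> a - 2 * s * (cmod b)^2 + s^2 * (cmod b)^2 * c" for s :: real
  proof -
    define t where "t = - (of_real s * b)"
    define w where "w = x + sc t y"
    have fyx: "f y x = cnj b" unfolding b_def by (rule herm)
    have h1: "f w x = f x x + t * f y x" unfolding w_def by (simp only: add scl)
    have h2: "f w y = f x y + t * f y y" unfolding w_def by (simp only: add scl)
    have e1: "f x w = f x x + cnj t * b"
    proof -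
      have "f x w = cnj (f w x)" by (rule herm)
      also have "\<dots> = cnj (f x x) + cnj t * cnj (f y x)" unfolding h1 by simp
      also have "\<dots> = f x x + cnj t * b" unfolding fxx fyx b_def by simp
      finally show ?thesis .
    qed
    have e2: "f y w = f y x + cnj t * f y y"
    proof -
      have "f y w = cnj (f w y)" by (rule herm)
      also have "\<dots> = cnj (f x y) + cnj t * cnj (f y y)" unfolding h2 by simp
      also have "\<dots> = f y x + cnj t * f y y" unfolding fyy fyx b_def by simp
      finally show ?thesis .
    qed
    have "f w w = f x x + cnj t * b + t * (f y x + cnj t * f y y)"
      by (subst (1) w_def) (simp only: add scl e1 e2)
    also have "\<dots> = of_real a - of_real s * (b * cnj b) - of_real s * (b * cnj b) + of_real (s^2) * (b * cnj b) * of_real c"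
      unfolding t_def fxx fyy fyx by (simp add: algebra_simps power2_eq_square)
    also have "\<dots> = of_real (a - 2 * s * (cmod b)^2 + s^2 * (cmod b)^2 * c)"
      unfolding complex_norm_square[symmetric] by (simp add: algebra_simps)
    finally show ?thesis using pos[of w] by simp
  qed
  have a0: "0 \<le> a" using key[of 0] by simp
  show ?thesis
  proof (cases "c = 0")
    case True
    show ?thesis
    proof (rule ccontr)
      assume "\<not> ?thesis"
      hence bp: "0 < (cmod b)^2" using True b_def c_def by auto
      have "0 \<le> a - 2 * ((a+1) / (2 * (cmod b)^2)) * (cmod b)^2" using key[of "(a+1) / (2 * (cmod b)^2)"] True by simp
      with bp show False by (simp add: field_simps)
    qed
  next
    case False
    have c0: "0 < c" using False pos[of y] c_def by simp
    have "0 \<le> a - 2 * (1/c) * (cmod b)^2 + (1/c)^2 * (cmod b)^2 * c" using key[of "1/c"] .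
    hence "0 \<le> a * c - (cmod b)^2" using c0 by (simp add: field_simps power2_eq_square)
    thus ?thesis unfolding a_def c_def b_def by simp
  qed
qed


lemma cs_sqrt:
  fixes f :: "'a::ab_group_add \<Rightarrow> 'a \<Rightarrow> complex" and sc :: "complex \<Rightarrow> 'a \<Rightarrow> 'a"
  assumes add: "\<And>x y z. f (x+y) z = f x z + f y z"
    and scl: "\<And>c x y. f (sc c x) y = c * f x y"
    and herm: "\<And>x y. f y x = cnj (f x y)"
    and pos: "\<And>x. 0 \<le> Re (f x x)"
  shows "cmod (f x y) \<le> sqrt (Re (f x x)) * sqrt (Re (f y y))"
proof -
  have "sqrt ((cmod (f x y))^2) \<le> sqrt (Re (f x x) * Re (f y y))"
    using cs_gen[of f sc, OF add scl herm pos] by (rule real_sqrt_le_mono)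
  thus ?thesis by (simp add: real_sqrt_mult)
qed

lemma polar_herm:
  fixes f :: "'a::ab_group_add \<Rightarrow> 'a \<Rightarrow> complex" and sc :: "complex \<Rightarrow> 'a \<Rightarrow> 'a"
  assumes addL: "\<And>x y z. f (x+y) z = f x z + f y z"
    and addR: "\<And>x y z. f x (y+z) = f x y + f x z"
    and sclL: "\<And>c x y. f (sc c x) y = c * f x y"
    and sclR: "\<And>c x y. f x (sc c y) = cnj c * f x y"
    and im0: "\<And>x. Im (f x x) = 0"
  shows "f y x = cnj (f x y)"
proof -
  have p1: "f (x+y) (x+y) = f x x + f x y + f y x + f y y" by (simp add: addL addR)
  have p2: "f (x + sc \<i> y) (x + sc \<i> y) = f x x - \<i> * f x y + \<i> * f y x + f y y"
    by (simp add: addL addR sclL sclR algebra_simps)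
  have i1: "Im (f x y) + Im (f y x) = 0" using arg_cong[OF p1, of Im] im0[of "x+y"] im0[of x] im0[of y] by simp
  have i2: "Re (f y x) - Re (f x y) = 0" using arg_cong[OF p2, of Im] im0[of "x + sc \<i> y"] im0[of x] im0[of y] by simp
  show ?thesis using i1 i2 by (simp add: complex_eq_iff)
qed

lemma iter_bound:
  fixes B :: "'a \<Rightarrow> 'a \<Rightarrow> complex" and n :: "'a \<Rightarrow> real"
  assumes cs: "\<And>x y. cmod (B x y) \<le> n x * n y"
    and nd: "\<And>x. (n x)^2 = Re (B x x)"
    and n0: "\<And>x. 0 \<le> n x"
  shows "\<forall>T. (\<forall>x y. B (T x) y = B x (T y)) \<longrightarrow>
           (\<forall>z. n (T z) ^ (2^k) \<le> n ((T^^(2^k)) z) * n z ^ (2^k - 1))"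
proof (induction k)
  case 0
  then show ?case by simp
next
  case (Suc k)
  show ?case
  proof (intro allI impI)
    fix T :: "'a \<Rightarrow> 'a" and z
    assume sym: "\<forall>x y. B (T x) y = B x (T y)"
    have sym2: "\<forall>x y. B ((T \<circ> T) x) y = B x ((T \<circ> T) y)" using sym by simp
    have IH: "n ((T \<circ> T) z) ^ (2^k) \<le> n (((T \<circ> T)^^(2^k)) z) * n z ^ (2^k - 1)"
      using Suc.IH sym2 by blast
    have pw: "(T \<circ> T)^^(2^k) = T^^(2^Suc k)"
    proof -
      have "T \<circ> T = T^^2" by (simp add: numeral_2_eq_2)
      hence "(T \<circ> T)^^(2^k) = T^^(2 * 2^k)" by (simp add: funpow_mult)
      thus ?thesis by simp
    qed
    have sq: "n (T z) ^ 2 \<le> n (T (T z)) * n z"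
    proof -
      have "n (T z) ^ 2 = Re (B (T z) (T z))" by (rule nd)
      also have "\<dots> = Re (B (T (T z)) z)" using sym by simp
      also have "\<dots> \<le> cmod (B (T (T z)) z)" by (rule complex_Re_le_cmod)
      also have "\<dots> \<le> n (T (T z)) * n z" by (rule cs)
      finally show ?thesis .
    qed
    have "n (T z) ^ (2^Suc k) = (n (T z) ^ 2) ^ (2^k)" by (simp add: power_mult[symmetric] mult.commute)
    also have "\<dots> \<le> (n (T (T z)) * n z) ^ (2^k)" using sq n0 by (simp add: power_mono)
    also have "\<dots> = n (T (T z)) ^ (2^k) * n z ^ (2^k)" by (simp add: power_mult_distrib)
    also have "\<dots> \<le> (n ((T^^(2^Suc k)) z) * n z ^ (2^k - 1)) * n z ^ (2^k)"
      using IH pw n0 by (intro mult_right_mono) (auto)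
    also have "\<dots> = n ((T^^(2^Suc k)) z) * n z ^ (2^Suc k - 1)"
    proof -
      have "(2::nat)^k - 1 + 2^k = 2^Suc k - 1" using one_le_power[of "2::nat" k] by simp
      hence "n z ^ (2^k - 1) * n z ^ (2^k) = n z ^ (2^Suc k - 1)" by (metis power_add)
      thus ?thesis by (simp add: mult.assoc)
    qed
    finally show "n (T z) ^ (2^Suc k) \<le> n ((T^^(2^Suc k)) z) * n z ^ (2^Suc k - 1)" .
  qed
qed

lemma pow_bounded_le1:
  fixes a K :: real
  assumes "0 \<le> a" and "\<And>k. a ^ (2^k) \<le> K"
  shows "a \<le> 1"
proof (rule ccontr)
  assume "\<not> a \<le> 1"
  hence a1: "0 < a - 1" by simp
  obtain k :: nat where k: "K < real k * (a - 1)" using reals_Archimedean3[OF a1] by blast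
  have "1 + real (2^k) * (a - 1) \<le> (1 + (a - 1)) ^ (2^k)"
    by (rule Bernoulli_inequality) (use a1 in simp)
  hence "1 + real (2^k) * (a - 1) \<le> K" using assms(2)[of k] by simp
  moreover have "real k \<le> real (2^k)" using less_exp[of k] by simp
  hence "real k * (a - 1) \<le> real (2^k) * (a - 1)" using a1 by (simp add: mult_right_mono)
  ultimately show False using k by simp
qed


lemma ineq1:
  fixes m h g :: real
  assumes "0 \<le> m" "m \<le> h" "0 \<le> g" "g \<le> h"
  shows "(1 + m^2) * g^2 \<le> g^2 + h^4"
proof -
  have a: "m^2 \<le> h^2" by (rule power_mono[OF assms(2) assms(1)])
  have b: "g^2 \<le> h^2" by (rule power_mono[OF assms(4) assms(3)])
  have "m^2 * g^2 \<le> h^2 * h^2" using a b by (rule mult_mono) simp_all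
  moreover have "h^4 = h^2 * h^2" by (simp flip: power_add)
  moreover have "(1 + m^2) * g^2 = g^2 + m^2 * g^2" by (simp only: distrib_right mult_1_left)
  ultimately show ?thesis by linarith
qed

lemma ineq2:
  fixes c h g :: real
  assumes "0 \<le> c" "c \<le> g" "g \<le> h"
  shows "c^2 * (1 + h^2) \<le> g^2 + h^4"
proof -
  have a: "c^2 \<le> g^2" by (rule power_mono[OF assms(2) assms(1)])
  have b: "c^2 \<le> h^2" by (rule power_mono[OF order_trans[OF assms(2,3)] assms(1)])
  have "c^2 * h^2 \<le> h^2 * h^2" using b by (rule mult_right_mono) simp
  moreover have "h^4 = h^2 * h^2" by (simp flip: power_add)
  moreover have "c^2 * (1 + h^2) = c^2 + c^2 * h^2" by (simp only: distrib_left mult_1_right)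
  ultimately show ?thesis using a by linarith
qed

theorem theorem2p29:
  fixes sc :: "complex \<Rightarrow> 'a::ab_group_add \<Rightarrow> 'a"
    and ip :: "'a \<Rightarrow> 'a \<Rightarrow> complex"
    and A S :: "'a \<Rightarrow> 'a"
  assumes "is_complex_hilbert sc ip"
    and "positive_op sc ip A"
    and "\<exists>x. A x \<noteq> 0"
    and "BA sc ip A S"
  shows "(domegaA ip A S)\<^sup>2 \<ge>
           max ((1 + (mA ip A S)\<^sup>2) * (omegaA ip A S)\<^sup>2)
               ((1 + (opnormA ip A S)\<^sup>2) * (cA ip A S)\<^sup>2)"
proof -
  have H: "(\<forall>x y z. ip (x + y) z = ip x z + ip y z) \<and> (\<forall>c x y. ip (sc c x) y = c * ip x y) \<and>
     (\<forall>x y. ip y x = cnj (ip x y)) \<and> (\<forall>x. 0 \<le> Re (ip x x)) \<and> (\<forall>x. ip x x = 0 \<longrightarrow> x = 0)"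
    using assms(1) unfolding is_complex_hilbert_def by (elim conjE) (intro conjI; assumption)
  have ipadd: "\<And>x y z. ip (x + y) z = ip x z + ip y z" using H by blast
  have ipscl: "\<And>c x y. ip (sc c x) y = c * ip x y" using H by blast
  have iph: "\<And>x y. ip y x = cnj (ip x y)" using H by blast
  have ippos: "\<And>x. 0 \<le> Re (ip x x)" using H by blast
  have ipdef: "\<And>x. ip x x = 0 \<Longrightarrow> x = 0" using H by blast
  have ipaddR: "ip x (y + z) = ip x y + ip x z" for x y z
  proof -
    have "ip x (y + z) = cnj (ip (y + z) x)" by (rule iph)
    also have "\<dots> = cnj (ip y x) + cnj (ip z x)" by (simp add: ipadd)
    also have "\<dots> = ip x y + ip x z" using iph[of x y] iph[of x z] by simp
    finally show ?thesis .
  qed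
  have ipsclR: "ip x (sc c y) = cnj c * ip x y" for x y c
  proof -
    have "ip x (sc c y) = cnj (ip (sc c y) x)" by (rule iph)
    also have "\<dots> = cnj c * cnj (ip y x)" by (simp add: ipscl)
    also have "\<dots> = cnj c * ip x y" using iph[of x y] by simp
    finally show ?thesis .
  qed
  have bA: "bounded_op sc ip A" using assms(2) unfolding positive_op_def by blast
  have Alin: "Vector_Spaces.linear sc sc A" using bA unfolding bounded_op_def by blast
  have Aadd: "A (x + y) = A x + A y" for x y using Alin unfolding Vector_Spaces.linear_iff by blast
  have Ascl: "A (sc c x) = sc c (A x)" for c x using Alin unfolding Vector_Spaces.linear_iff by blast
  obtain CA0 where CA0: "\<And>x. hnorm ip (A x) \<le> CA0 * hnorm ip x" using bA unfolding bounded_op_def by blast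
  define CA where "CA = max CA0 0"
  have hn0: "0 \<le> hnorm ip x" for x unfolding hnorm_def using ippos[of x] by simp
  have CA: "hnorm ip (A x) \<le> CA * hnorm ip x" for x
    using CA0[of x] hn0[of x] unfolding CA_def by (smt (verit) mult_right_mono max.cobounded1)
  have CA_ge: "0 \<le> CA" unfolding CA_def by simp
  define B where "B = (\<lambda>x y. ip (A x) y)"
  have BaddL: "\<And>x y z. B (x + y) z = B x z + B y z" by (simp add: B_def Aadd ipadd)
  have BaddR: "\<And>x y z. B x (y + z) = B x y + B x z" by (simp add: B_def ipaddR)
  have BsclL: "\<And>c x y. B (sc c x) y = c * B x y" by (simp add: B_def Ascl ipscl)
  have BsclR: "\<And>c x y. B x (sc c y) = cnj c * B x y" by (simp add: B_def ipsclR)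
  have Bim0: "\<And>x. Im (B x x) = 0" using assms(2) unfolding positive_op_def B_def by blast
  have Bpos: "\<And>x. 0 \<le> Re (B x x)" using assms(2) unfolding positive_op_def B_def by blast
  have Bherm: "\<And>x y. B y x = cnj (B x y)"
    by (rule polar_herm[of B sc, OF BaddL BaddR BsclL BsclR Bim0])
  have nA: "normA ip A z = sqrt (Re (B z z))" for z unfolding normA_def ipA_def B_def by simp
  have nA0: "0 \<le> normA ip A z" for z unfolding nA using Bpos[of z] by simp
  have nAsq: "(normA ip A z)^2 = Re (B z z)" for z unfolding nA using Bpos[of z] by simp
  have Bcs: "cmod (B x y) \<le> normA ip A x * normA ip A y" for x y
    unfolding nA by (rule cs_sqrt[of B sc, OF BaddL BsclL Bherm Bpos])
  have ipcs: "cmod (ip x y) \<le> hnorm ip x * hnorm ip y" for x y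
    unfolding hnorm_def by (rule cs_sqrt[of ip sc, OF ipadd ipscl iph ippos])
  have F2: "normA ip A w \<le> sqrt CA * hnorm ip w" for w
  proof -
    have "Re (B w w) \<le> cmod (B w w)" by (rule complex_Re_le_cmod)
    also have "\<dots> \<le> hnorm ip (A w) * hnorm ip w" unfolding B_def by (rule ipcs)
    also have "\<dots> \<le> CA * hnorm ip w * hnorm ip w" using CA[of w] hn0[of w] by (simp add: mult_right_mono)
    finally have "sqrt (Re (B w w)) \<le> sqrt (CA * (hnorm ip w)^2)"
      by (simp add: power2_eq_square mult.assoc)
    thus ?thesis unfolding nA using hn0[of w] by (simp add: real_sqrt_mult)
  qed
  obtain x0 where x0: "A x0 \<noteq> 0" using assms(3) by blast
  define r where "r = Re (B x0 x0)"
  have r0: "0 < r"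
  proof (rule ccontr)
    assume "\<not> 0 < r"
    hence "r = 0" using Bpos[of x0] r_def by simp
    hence "normA ip A x0 = 0" unfolding nA r_def by simp
    hence "cmod (B x0 (A x0)) \<le> 0" using Bcs[of x0 "A x0"] by simp
    hence "ip (A x0) (A x0) = 0" unfolding B_def by simp
    thus False using ipdef x0 by blast
  qed
  define z0 where "z0 = sc (of_real (1 / sqrt r)) x0"
  have "B z0 z0 = cnj (of_real (1 / sqrt r)) * (of_real (1 / sqrt r) * B x0 x0)"
    unfolding z0_def by (simp only: BsclL BsclR)
  also have "\<dots> = of_real ((1 / sqrt r) * (1 / sqrt r)) * B x0 x0"
    by (simp only: complex_cnj_complex_of_real mult.assoc[symmetric] of_real_mult[symmetric])
  finally have "Re (B z0 z0) = ((1 / sqrt r) * (1 / sqrt r)) * r" unfolding r_def by simp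
  hence "Re (B z0 z0) = 1" using r0 by simp
  hence z0U: "normA ip A z0 = 1" unfolding nA by simp
  have bS: "bounded_op sc ip S" using assms(4) unfolding BA_def by blast
  obtain R where bR: "bounded_op sc ip R" and BArel: "\<And>x y. ip (A (R x)) y = ip (A x) (S y)"
    using assms(4) unfolding BA_def by blast
  obtain CS0 where CS0: "\<And>x. hnorm ip (S x) \<le> CS0 * hnorm ip x" using bS unfolding bounded_op_def by blast
  obtain CR0 where CR0: "\<And>x. hnorm ip (R x) \<le> CR0 * hnorm ip x" using bR unfolding bounded_op_def by blast
  have CS: "hnorm ip (S x) \<le> max CS0 0 * hnorm ip x" for x
    using CS0[of x] hn0[of x] by (smt (verit) mult_right_mono max.cobounded1)
  have CR: "hnorm ip (R x) \<le> max CR0 0 * hnorm ip x" for x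
    using CR0[of x] hn0[of x] by (smt (verit) mult_right_mono max.cobounded1)
  define M0 where "M0 = max CS0 0 * max CR0 0"
  have M0: "0 \<le> M0" unfolding M0_def by simp
  define T where "T = R \<circ> S"
  have TM: "hnorm ip (T x) \<le> M0 * hnorm ip x" for x
  proof -
    have "hnorm ip (T x) \<le> max CR0 0 * hnorm ip (S x)" unfolding T_def using CR by simp
    also have "\<dots> \<le> max CR0 0 * (max CS0 0 * hnorm ip x)" using CS by (simp add: mult_left_mono)
    finally show ?thesis unfolding M0_def by (simp add: algebra_simps)
  qed
  have TMn: "hnorm ip ((T^^n) x) \<le> M0^n * hnorm ip x" for n x
  proof (induction n)
    case 0 then show ?case by simp
  next
    case (Suc n)
    have "hnorm ip ((T^^Suc n) x) \<le> M0 * hnorm ip ((T^^n) x)" using TM by simp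
    also have "\<dots> \<le> M0 * (M0^n * hnorm ip x)" using Suc M0 by (simp add: mult_left_mono)
    finally show ?case by (simp add: algebra_simps)
  qed
  have BR: "B (R x) y = B x (S y)" for x y unfolding B_def by (rule BArel)
  have Tsym: "\<forall>x y. B (T x) y = B x (T y)"
  proof (intro allI)
    fix x y
    have "B (T x) y = B (S x) (S y)" unfolding T_def by (simp add: BR)
    moreover have "B x (T y) = B (S x) (S y)"
    proof -
      have "B x (T y) = cnj (B (R (S y)) x)" unfolding T_def by (simp add: Bherm[of "R (S y)" x])
      also have "\<dots> = cnj (B (S y) (S x))" by (simp add: BR)
      also have "\<dots> = B (S x) (S y)" using Bherm[of "S x" "S y"] by simp
      finally show ?thesis .
    qed
    ultimately show "B (T x) y = B x (T y)" by simp
  qed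
  have iter: "normA ip A (T z) ^ (2^k) \<le> normA ip A ((T^^(2^k)) z) * normA ip A z ^ (2^k - 1)" for z k
    using iter_bound[of B "normA ip A", OF Bcs nAsq nA0] Tsym by blast
  define Mb where "Mb = M0 + 1"
  have Mb: "0 < Mb" unfolding Mb_def using M0 by simp
  have Tb: "normA ip A (T z) \<le> Mb" if zU: "normA ip A z = 1" for z
  proof -
    define a where "a = normA ip A (T z) / Mb"
    have a0: "0 \<le> a" unfolding a_def using nA0 Mb by simp
    have "a ^ (2^k) \<le> sqrt CA * hnorm ip z" for k
    proof -
      have "a ^ (2^k) = normA ip A (T z) ^ (2^k) / Mb ^ (2^k)" unfolding a_def by (simp add: power_divide)
      also have "\<dots> \<le> (sqrt CA * (M0 ^ (2^k) * hnorm ip z)) / Mb ^ (2^k)"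
      proof (rule divide_right_mono)
        have "normA ip A (T z) ^ (2^k) \<le> normA ip A ((T^^(2^k)) z)" using iter[of z k] zU by simp
        also have "\<dots> \<le> sqrt CA * hnorm ip ((T^^(2^k)) z)" by (rule F2)
        also have "\<dots> \<le> sqrt CA * (M0 ^ (2^k) * hnorm ip z)" using TMn CA_ge by (intro mult_left_mono) simp_all
        finally show "normA ip A (T z) ^ (2^k) \<le> sqrt CA * (M0 ^ (2^k) * hnorm ip z)" .
      qed (use Mb in simp)
      also have "\<dots> \<le> (sqrt CA * (Mb ^ (2^k) * hnorm ip z)) / Mb ^ (2^k)"
      proof -
        have "M0 ^ (2^k) \<le> Mb ^ (2^k)" unfolding Mb_def using M0 by (simp add: power_mono)
        hence "sqrt CA * (M0 ^ (2^k) * hnorm ip z) \<le> sqrt CA * (Mb ^ (2^k) * hnorm ip z)"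
          using hn0[of z] CA_ge by (simp add: mult_left_mono mult_right_mono)
        thus ?thesis using Mb by (intro divide_right_mono) simp_all
      qed
      also have "\<dots> = sqrt CA * hnorm ip z" using Mb by simp
      finally show ?thesis .
    qed
    hence "a \<le> 1" using pow_bounded_le1[OF a0] by blast
    thus ?thesis unfolding a_def using Mb by simp
  qed
  have Sb: "(normA ip A (S z))^2 \<le> Mb" if zU: "normA ip A z = 1" for z
  proof -
    have "(normA ip A (S z))^2 = Re (B (S z) (S z))" by (rule nAsq)
    also have "\<dots> = Re (B (T z) z)" unfolding T_def by (simp add: BR)
    also have "\<dots> \<le> cmod (B (T z) z)" by (rule complex_Re_le_cmod)
    also have "\<dots> \<le> normA ip A (T z) * normA ip A z" by (rule Bcs)
    also have "\<dots> \<le> Mb" using Tb[OF zU] zU by simp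
    finally show ?thesis .
  qed
  define U where "U = {z. normA ip A z = 1}"
  define g where "g = (\<lambda>z. cmod (ipA ip A (S z) z))"
  define h where "h = (\<lambda>z. normA ip A (S z))"
  define f where "f = (\<lambda>z. sqrt ((g z)^2 + (h z)^4))"
  have Une: "U \<noteq> {}" using z0U unfolding U_def by auto
  have z0U': "z0 \<in> U" using z0U unfolding U_def by simp
  have g0: "0 \<le> g z" for z unfolding g_def by simp
  have h0: "0 \<le> h z" for z unfolding h_def by (rule nA0)
  have f0: "0 \<le> f z" for z unfolding f_def by simp
  have gh: "g z \<le> h z" if "z \<in> U" for z
  proof -
    have "g z = cmod (B (S z) z)" unfolding g_def ipA_def B_def by simp
    also have "\<dots> \<le> normA ip A (S z) * normA ip A z" by (rule Bcs)
    finally show ?thesis using that unfolding U_def h_def by simp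
  qed
  have hb: "(h z)^2 \<le> Mb" if "z \<in> U" for z using Sb that unfolding U_def h_def by simp
  have fb: "f z \<le> sqrt (Mb + Mb^2)" if "z \<in> U" for z
  proof -
    have "(g z)^2 \<le> (h z)^2" using gh[OF that] g0[of z] by (rule power_mono)
    hence a: "(g z)^2 \<le> Mb" using hb[OF that] by simp
    have "((h z)^2)^2 \<le> Mb^2" using hb[OF that] by (rule power_mono) simp
    hence b: "(h z)^4 \<le> Mb^2" by (simp flip: power_mult)
    show ?thesis unfolding f_def using a b by (intro real_sqrt_le_mono) simp
  qed
  have fsq: "(f z)^2 = (g z)^2 + (h z)^4" for z unfolding f_def by simp
  have bf: "bdd_above (f ` U)" using fb by (intro bdd_aboveI2) blast
  have bg: "bdd_above (g ` U)" using fb gh hb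
    by (intro bdd_aboveI2[where M="sqrt Mb"]) (meson order_trans real_le_rsqrt)
  have bh: "bdd_above (h ` U)" using hb by (intro bdd_aboveI2[where M="sqrt Mb"]) (meson real_le_rsqrt)
  have bg': "bdd_below (g ` U)" using g0 by (intro bdd_belowI2) blast
  have bh': "bdd_below (h ` U)" using h0 by (intro bdd_belowI2) blast
  have dom: "domegaA ip A S = Sup (f ` U)" unfolding domegaA_def f_def g_def h_def U_def by simp
  have om: "omegaA ip A S = Sup (g ` U)" unfolding omegaA_def g_def U_def by simp
  have ca: "cA ip A S = Inf (g ` U)" unfolding cA_def g_def U_def by simp
  have ma: "mA ip A S = Inf (h ` U)" unfolding mA_def h_def U_def by simp
  have on: "opnormA ip A S = Sup (h ` U)" unfolding opnormA_def h_def U_def by simp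
  define D where "D = Sup (f ` U)"
  have fD: "f z \<le> D" if "z \<in> U" for z unfolding D_def using bf that by (rule cSUP_upper2) simp
  have D0: "0 \<le> D" using fD[OF z0U'] f0[of z0] by simp
  have key: "(g z)^2 + (h z)^4 \<le> D^2" if "z \<in> U" for z
    unfolding fsq[symmetric] using fD[OF that] f0[of z] by (rule power_mono)
  define m where "m = Inf (h ` U)"
  have m0: "0 \<le> m" unfolding m_def using Une h0 by (intro cINF_greatest) auto
  have mh: "m \<le> h z" if "z \<in> U" for z unfolding m_def using bh' that by (rule cINF_lower)
  define w where "w = Sup (g ` U)"
  define q where "q = sqrt (1 + m^2)"
  have q0: "0 < q" unfolding q_def by (simp add: add_pos_nonneg)
  have qsq: "q^2 = 1 + m^2" unfolding q_def by (simp add: add_nonneg_nonneg)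
  have gq: "g z \<le> D / q" if "z \<in> U" for z
  proof -
    have "(q * g z)^2 = (1 + m^2) * (g z)^2" by (simp add: power_mult_distrib qsq)
    also have "\<dots> \<le> (g z)^2 + (h z)^4"
      by (rule ineq1[OF m0 mh[OF that] g0 order_trans[OF gh[OF that] order_refl]])
    also have "\<dots> \<le> D^2" by (rule key[OF that])
    finally have "q * g z \<le> D" using D0 by (rule power2_le_imp_le)
    thus ?thesis using q0 by (simp add: pos_le_divide_eq mult.commute)
  qed
  have wle: "w \<le> D / q" unfolding w_def using Une gq by (intro cSUP_least) auto
  have w0: "0 \<le> w" unfolding w_def using g0[of z0] cSUP_upper[OF z0U' bg] by simp
  have p1: "(1 + m^2) * w^2 \<le> D^2"
  proof -
    have "q * w \<le> D" using wle q0 by (simp add: pos_le_divide_eq mult.commute)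
    hence "(q * w)^2 \<le> D^2" using q0 w0 by (intro power_mono) simp_all
    thus ?thesis by (simp add: power_mult_distrib qsq)
  qed
  define c where "c = Inf (g ` U)"
  have c0: "0 \<le> c" unfolding c_def using Une g0 by (intro cINF_greatest) auto
  have cg: "c \<le> g z" if "z \<in> U" for z unfolding c_def using bg' that by (rule cINF_lower)
  define N where "N = Sup (h ` U)"
  have N0: "0 \<le> N" unfolding N_def using h0[of z0] cSUP_upper[OF z0U' bh] by simp
  have p2: "(1 + N^2) * c^2 \<le> D^2"
  proof (cases "c = 0")
    case True then show ?thesis by simp
  next
    case False
    hence cp: "0 < c" using c0 by simp
    define Q where "Q = D^2 / c^2 - 1"
    have hQ: "(h z)^2 \<le> Q" if "z \<in> U" for z
    proof -
      have "c^2 * (1 + (h z)^2) \<le> D^2"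
        using ineq2[OF c0 cg[OF that] gh[OF that]] key[OF that] by linarith
      hence "1 + (h z)^2 \<le> D^2 / c^2" using cp by (simp add: pos_le_divide_eq mult.commute)
      thus ?thesis unfolding Q_def by simp
    qed
    have Q0: "0 \<le> Q" using hQ[OF z0U'] by (smt (verit) zero_le_power2)
    have "N \<le> sqrt Q" unfolding N_def using Une hQ by (intro cSUP_least) (auto intro: real_le_rsqrt)
    hence "N^2 \<le> Q" using N0 Q0 by (metis power_mono real_sqrt_pow2)
    hence "(1 + N^2) * c^2 \<le> (1 + Q) * c^2" by (intro mult_right_mono) simp_all
    also have "\<dots> = D^2" unfolding Q_def using cp by simp
    finally show ?thesis .
  qed
  show ?thesis unfolding dom om ca ma on D_def[symmetric] m_def[symmetric] w_def[symmetric]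
      c_def[symmetric] N_def[symmetric]
    using p1 p2 by simp
qed

end
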